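(* Let $R$ be a compact Hausdorff unitary topological ring satisfying the first countability axiom, and let $f:M\to N$ be a continuous homomorphism of complete totally disconnected $R$-modules. Then $f$ is strict if and only if $f(M)$ is closed in $N$.
   Context: A complete totally disconnected (t.d.) $R$-module is a Hausdorff, complete topological left $R$-module $M$ which has a basis of neighbourhoods of $0$ consisting of open submodules and which satisfies the second countability axiom. A continuous $R$-linear homomorphism $f:M\to N$ is called strict if the induced bijection $M/\ker(f)\to f(M)$ is a homeomorphism, where $M/\ker f$ carries the quotient topology and $f(M)$ the subspace topology of $N$. *)

theory Defs
  imports "HOL-Analysis.Analysis" "HOL-Algebra.Algebra"
begin

definition left_module :: "('r, 'x) ring_scheme \<Rightarrow> ('r, 'm) module \<Rightarrow> bool" where
  "left_module R M \<longleftrightarrow> ring R \<and> abelian_group M \<and>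
     (\<forall>a\<in>carrier R. \<forall>x\<in>carrier M. a \<odot>\<^bsub>M\<^esub> x \<in> carrier M) \<and>
     (\<forall>a\<in>carrier R. \<forall>b\<in>carrier R. \<forall>x\<in>carrier M.
        (a \<oplus>\<^bsub>R\<^esub> b) \<odot>\<^bsub>M\<^esub> x = a \<odot>\<^bsub>M\<^esub> x \<oplus>\<^bsub>M\<^esub> b \<odot>\<^bsub>M\<^esub> x) \<and>
     (\<forall>a\<in>carrier R. \<forall>x\<in>carrier M. \<forall>y\<in>carrier M.
        a \<odot>\<^bsub>M\<^esub> (x \<oplus>\<^bsub>M\<^esub> y) = a \<odot>\<^bsub>M\<^esub> x \<oplus>\<^bsub>M\<^esub> a \<odot>\<^bsub>M\<^esub> y) \<and>
     (\<forall>a\<in>carrier R. \<forall>b\<in>carrier R. \<forall>x\<in>carrier M.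
        (a \<otimes>\<^bsub>R\<^esub> b) \<odot>\<^bsub>M\<^esub> x = a \<odot>\<^bsub>M\<^esub> (b \<odot>\<^bsub>M\<^esub> x)) \<and>
     (\<forall>x\<in>carrier M. \<one>\<^bsub>R\<^esub> \<odot>\<^bsub>M\<^esub> x = x)"

definition topological_ring :: "('r, 'x) ring_scheme \<Rightarrow> 'r topology \<Rightarrow> bool" where
  "topological_ring R TR \<longleftrightarrow> ring R \<and> topspace TR = carrier R \<and>
     continuous_map (prod_topology TR TR) TR (\<lambda>(a, b). a \<oplus>\<^bsub>R\<^esub> b) \<and>
     continuous_map TR TR (\<lambda>a. \<ominus>\<^bsub>R\<^esub> a) \<and>
     continuous_map (prod_topology TR TR) TR (\<lambda>(a, b). a \<otimes>\<^bsub>R\<^esub> b)"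

definition topological_module ::
  "('r, 'x) ring_scheme \<Rightarrow> 'r topology \<Rightarrow> ('r, 'm) module \<Rightarrow> 'm topology \<Rightarrow> bool" where
  "topological_module R TR M TM \<longleftrightarrow> left_module R M \<and> topspace TM = carrier M \<and>
     continuous_map (prod_topology TM TM) TM (\<lambda>(x, y). x \<oplus>\<^bsub>M\<^esub> y) \<and>
     continuous_map TM TM (\<lambda>x. \<ominus>\<^bsub>M\<^esub> x) \<and>
     continuous_map (prod_topology TR TM) TM (\<lambda>(a, x). a \<odot>\<^bsub>M\<^esub> x)"

definition complete_top_group :: "('m, 'x) ring_scheme \<Rightarrow> 'm topology \<Rightarrow> bool" where
  "complete_top_group M TM \<longleftrightarrow>
     (\<forall>F :: 'm filter. F \<noteq> bot \<and> eventually (\<lambda>x. x \<in> carrier M) F \<and>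
        (\<forall>U. openin TM U \<and> \<zero>\<^bsub>M\<^esub> \<in> U \<longrightarrow>
             eventually (\<lambda>(x, y). x \<ominus>\<^bsub>M\<^esub> y \<in> U) (F \<times>\<^sub>F F))
      \<longrightarrow> (\<exists>l. limitin TM id l F))"

definition complete_td_module ::
  "('r, 'x) ring_scheme \<Rightarrow> 'r topology \<Rightarrow> ('r, 'm) module \<Rightarrow> 'm topology \<Rightarrow> bool" where
  "complete_td_module R TR M TM \<longleftrightarrow>
     topological_module R TR M TM \<and> Hausdorff_space TM \<and> complete_top_group M TM \<and>
     (\<forall>U. openin TM U \<and> \<zero>\<^bsub>M\<^esub> \<in> U \<longrightarrow>
          (\<exists>V. openin TM V \<and> submodule V R M \<and> V \<subseteq> U)) \<and>
     second_countable TM"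

definition lmodule_hom ::
  "('r, 'x) ring_scheme \<Rightarrow> ('r, 'm) module \<Rightarrow> ('r, 'n) module \<Rightarrow> ('m \<Rightarrow> 'n) \<Rightarrow> bool" where
  "lmodule_hom R M N f \<longleftrightarrow> f \<in> carrier M \<rightarrow> carrier N \<and>
     (\<forall>x\<in>carrier M. \<forall>y\<in>carrier M. f (x \<oplus>\<^bsub>M\<^esub> y) = f x \<oplus>\<^bsub>N\<^esub> f y) \<and>
     (\<forall>a\<in>carrier R. \<forall>x\<in>carrier M. f (a \<odot>\<^bsub>M\<^esub> x) = a \<odot>\<^bsub>N\<^esub> f x)"

definition quotient_top :: "'a topology \<Rightarrow> 'a set set \<Rightarrow> 'a set topology" where
  "quotient_top T P = topology (\<lambda>U. U \<subseteq> P \<and> openin T (Union U))"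

text \<open>f : M \<rightarrow> N is strict if the induced bijection M/ker f \<rightarrow> f(M), K +> x \<mapsto> f x,
  is a homeomorphism (quotient topology on M/ker f, subspace topology on f(M)).\<close>
definition strict_hom ::
  "('r, 'm) module \<Rightarrow> 'm topology \<Rightarrow> ('r, 'n) module \<Rightarrow> 'n topology \<Rightarrow> ('m \<Rightarrow> 'n) \<Rightarrow> bool" where
  "strict_hom M TM N TN f \<longleftrightarrow>
     homeomorphic_map (quotient_top TM (A_RCOSETS M (a_kernel M N f)))
                      (subtopology TN (f ` carrier M))
                      (\<lambda>C. f (SOME x. x \<in> C))"

end

theory Submission
  imports Defs
begin

context abelian_group begin
lemma alg1: "a \<in> carrier G \<Longrightarrow> b \<in> carrier G \<Longrightarrow> c \<in> carrier G \<Longrightarrow>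
  (a \<oplus> \<ominus> b) \<oplus> (b \<oplus> \<ominus> c) = a \<oplus> \<ominus> c"
  by (simp add: a_assoc r_neg1)
lemma alg2: "a \<in> carrier G \<Longrightarrow> b \<in> carrier G \<Longrightarrow> c \<in> carrier G \<Longrightarrow>
  (a \<oplus> \<ominus> c) \<oplus> \<ominus> (b \<oplus> \<ominus> c) = a \<oplus> \<ominus> b"
proof -
  assume c: "a \<in> carrier G" "b \<in> carrier G" "c \<in> carrier G"
  then have "\<ominus> (b \<oplus> \<ominus> c) = c \<oplus> \<ominus> b" by (simp add: minus_add a_comm)
  then show ?thesis using c by (simp add: a_assoc r_neg1)
qed
end

locale tg = abelian_group G for G (structure) +
  fixes T :: "'a topology"
  assumes top: "topspace T = carrier G"
  and addc: "continuous_map (prod_topology T T) T (\<lambda>(x,y). x \<oplus> y)"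
  and negc: "continuous_map T T (\<lambda>x. \<ominus> x)"
  and haus: "Hausdorff_space T"
  and compl: "complete_top_group G T"
  and nb: "\<forall>U. openin T U \<and> \<zero> \<in> U \<longrightarrow> (\<exists>V. openin T V \<and> additive_subgroup V G \<and> V \<subseteq> U)"
  and sc: "second_countable T"
begin

lemma trans_cont: "a \<in> carrier G \<Longrightarrow> continuous_map T T (\<lambda>x. a \<oplus> x)"
proof -
  assume a: "a \<in> carrier G"
  have "continuous_map T (prod_topology T T) (\<lambda>x. (a, x))"
    using a top by (intro continuous_map_pairedI) auto
  from continuous_map_compose[OF this addc] show ?thesis by (simp add: o_def)
qed

lemma pre_open: "openin T U \<Longrightarrow> a \<in> carrier G \<Longrightarrow> openin T {x \<in> carrier G. a \<oplus> x \<in> U}"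
  using openin_continuous_map_preimage[OF trans_cont] top by metis

lemma sub_closed: "openin T V \<Longrightarrow> additive_subgroup V G \<Longrightarrow> closedin T V"
proof -
  assume o: "openin T V" and s: "additive_subgroup V G"
  interpret V: additive_subgroup V G by fact
  have eq: "topspace T - V = (\<Union>x\<in>carrier G - V. {y \<in> carrier G. \<ominus> x \<oplus> y \<in> V})"
  proof safe
    fix y assume "y \<in> topspace T" "y \<notin> V"
    then show "y \<in> (\<Union>x\<in>carrier G - V. {y \<in> carrier G. \<ominus> x \<oplus> y \<in> V})"
      using top by (auto intro!: bexI[of _ y] simp: l_neg)
  next
    fix x y assume "x \<in> carrier G" "x \<notin> V" "y \<in> carrier G" "\<ominus> x \<oplus> y \<in> V" "y \<in> V"
    then have "\<ominus> (\<ominus> x \<oplus> y) \<oplus> y \<in> V" using V.a_closed[OF V.a_inv_closed[OF \<open>\<ominus> x \<oplus> y \<in> V\<close>] \<open>y \<in> V\<close>] by simp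
    moreover have "\<ominus> (\<ominus> x \<oplus> y) \<oplus> y = x" using \<open>x \<in> carrier G\<close> \<open>y \<in> carrier G\<close>
      by (simp add: minus_add a_assoc l_neg)
    ultimately show False using \<open>x \<notin> V\<close> by metis
  qed (use top in auto)
  have "openin T (topspace T - V)" unfolding eq
    by (intro openin_Union) (auto intro!: pre_open o)
  then show ?thesis using V.a_subset top by (simp add: closedin_def)
qed

definition nbasis :: "(nat \<Rightarrow> 'a set) \<Rightarrow> bool" where
  "nbasis V \<longleftrightarrow> (\<forall>n. openin T (V n) \<and> additive_subgroup (V n) G \<and> V (Suc n) \<subseteq> V n) \<and>
     (\<forall>U. openin T U \<and> \<zero> \<in> U \<longrightarrow> (\<exists>n. V n \<subseteq> U))"

lemma nbasis_mono: "nbasis V \<Longrightarrow> m \<le> n \<Longrightarrow> V n \<subseteq> V m"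
  unfolding nbasis_def by (metis lift_Suc_antimono_le)

lemma nbasis_sub: "nbasis V \<Longrightarrow> (\<And>i. k i \<le> k (Suc i)) \<Longrightarrow> (\<And>i. i \<le> k i) \<Longrightarrow> nbasis (\<lambda>i. V (k i))"
  unfolding nbasis_def using nbasis_mono[of V]
  by (smt (verit, best) nbasis_def order_trans)

lemma S_prop: assumes "openin T Q" "\<zero> \<in> Q"
  shows "openin T (SOME V. openin T V \<and> additive_subgroup V G \<and> V \<subseteq> Q) \<and>
     additive_subgroup (SOME V. openin T V \<and> additive_subgroup V G \<and> V \<subseteq> Q) G \<and>
     (SOME V. openin T V \<and> additive_subgroup V G \<and> V \<subseteq> Q) \<subseteq> Q"
  using someI_ex[OF nb[rule_format, OF conjI[OF assms]]] by blast

lemma nbasis_exists: "\<exists>V. nbasis V"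
proof -
  obtain B where B: "countable B" "\<forall>V\<in>B. openin T V"
    "\<forall>U x. openin T U \<and> x \<in> U \<longrightarrow> (\<exists>V\<in>B. x \<in> V \<and> V \<subseteq> U)"
    using sc unfolding second_countable_def by blast
  define B0 where "B0 = {b\<in>B. \<zero> \<in> b}"
  have "\<zero> \<in> topspace T" using top by simp
  then have B0ne: "B0 \<noteq> {}" using B(3)[rule_format, of "topspace T" "\<zero>"] unfolding B0_def by auto
  have cB0: "countable B0" using B(1) unfolding B0_def by simp
  define U where "U n = from_nat_into B0 n" for n
  have U: "openin T (U n) \<and> \<zero> \<in> U n" for n
    using from_nat_into[OF B0ne, of n] B(2) unfolding U_def B0_def by auto
  define S where "S Q = (SOME V. openin T V \<and> additive_subgroup V G \<and> V \<subseteq> Q)" for Q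
  define V where "V = rec_nat (S (U 0)) (\<lambda>n Vn. S (U (Suc n) \<inter> Vn))"
  have V0: "V 0 = S (U 0)" and VS: "V (Suc n) = S (U (Suc n) \<inter> V n)" for n
    unfolding V_def by simp_all
  have P: "openin T (V n) \<and> additive_subgroup (V n) G \<and> V n \<subseteq> U n" for n
  proof (induction n)
    case 0
    show ?case unfolding V0 S_def using S_prop U by blast
  next
    case (Suc n)
    then have "\<zero> \<in> V n" using additive_subgroup.zero_closed by blast
    then have "openin T (U (Suc n) \<inter> V n)" "\<zero> \<in> U (Suc n) \<inter> V n" using Suc U by auto
    then show ?case unfolding VS S_def using S_prop[of "U (Suc n) \<inter> V n"] by blast
  qed
  have Q: "V (Suc n) \<subseteq> V n" for n
  proof -
    have "\<zero> \<in> V n" using P additive_subgroup.zero_closed by blast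
    then have "openin T (U (Suc n) \<inter> V n)" "\<zero> \<in> U (Suc n) \<inter> V n" using P U by auto
    then show ?thesis unfolding VS S_def using S_prop[of "U (Suc n) \<inter> V n"] by blast
  qed
  have "\<exists>n. V n \<subseteq> Q" if Qo: "openin T Q" "\<zero> \<in> Q" for Q
  proof -
    obtain b where "b \<in> B" "\<zero> \<in> b" "b \<subseteq> Q" using B(3)[rule_format, of Q "\<zero>"] Qo by blast
    then have "b \<in> B0" unfolding B0_def by simp
    then obtain n where "U n = b" using from_nat_into_surj[OF cB0] unfolding U_def by blast
    then show ?thesis using P[of n] \<open>b \<subseteq> Q\<close> by blast
  qed
  then have "nbasis V" unfolding nbasis_def using P Q by simp
  then show ?thesis by blast
qed

lemma lim_iff:
  assumes V: "nbasis V" and l: "l \<in> carrier G" and s: "\<And>m. s m \<in> carrier G"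
  shows "limitin T s l F \<longleftrightarrow> (\<forall>n. eventually (\<lambda>m. s m \<oplus> \<ominus> l \<in> V n) F)"
proof
  assume L: "limitin T s l F"
  show "\<forall>n. eventually (\<lambda>m. s m \<oplus> \<ominus> l \<in> V n) F"
  proof
    fix n
    have o: "openin T {x \<in> carrier G. \<ominus> l \<oplus> x \<in> V n}"
      using V l unfolding nbasis_def by (intro pre_open) auto
    have "l \<in> {x \<in> carrier G. \<ominus> l \<oplus> x \<in> V n}"
      using l V additive_subgroup.zero_closed unfolding nbasis_def by (fastforce simp: l_neg)
    then have "eventually (\<lambda>m. s m \<in> {x \<in> carrier G. \<ominus> l \<oplus> x \<in> V n}) F"
      using L o unfolding limitin_def by blast
    then show "eventually (\<lambda>m. s m \<oplus> \<ominus> l \<in> V n) F"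
      by eventually_elim (use l in \<open>auto simp: a_comm\<close>)
  qed
next
  assume R: "\<forall>n. eventually (\<lambda>m. s m \<oplus> \<ominus> l \<in> V n) F"
  show "limitin T s l F" unfolding limitin_def
  proof (intro conjI allI impI)
    show "l \<in> topspace T" using l top by simp
    fix U assume U: "openin T U \<and> l \<in> U"
    have "openin T {x \<in> carrier G. l \<oplus> x \<in> U}" using U l by (intro pre_open) auto
    moreover have "\<zero> \<in> {x \<in> carrier G. l \<oplus> x \<in> U}" using U l by simp
    ultimately obtain n where n: "V n \<subseteq> {x \<in> carrier G. l \<oplus> x \<in> U}" using V unfolding nbasis_def by blast
    show "eventually (\<lambda>m. s m \<in> U) F" using R[rule_format, of n]
    proof eventually_elim
      case (elim m)
      then have "l \<oplus> (s m \<oplus> \<ominus> l) \<in> U" using n by blast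
      then show ?case using l s[of m] by (simp add: a_comm[of "s m"] r_neg2)
    qed
  qed
qed

lemma seq_complete:
  assumes V: "nbasis V" and s: "\<And>n. s n \<in> carrier G" and d: "\<And>n. s (Suc n) \<oplus> \<ominus> s n \<in> V n"
  shows "\<exists>l\<in>carrier G. limitin T s l sequentially \<and> (\<forall>n. l \<oplus> \<ominus> s n \<in> V n)"
proof -
  have sub: "additive_subgroup (V n) G" and op: "openin T (V n)" for n using V unfolding nbasis_def by auto
  have A: "s m \<oplus> \<ominus> s n \<in> V n" if "n \<le> m" for m n
    using that
  proof (induction m rule: dec_induct)
    case base
    then show ?case using s[of n] additive_subgroup.zero_closed[OF sub[of n]] by (simp add: r_neg)
  next
    case (step k)
    have "s (Suc k) \<oplus> \<ominus> s k \<in> V n" using d[of k] nbasis_mono[OF V step(1)] by blast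
    then have "(s (Suc k) \<oplus> \<ominus> s k) \<oplus> (s k \<oplus> \<ominus> s n) \<in> V n"
      using additive_subgroup.a_closed[OF sub[of n]] step(3) by blast
    then show ?case using s by (simp add: alg1)
  qed
  have C: "s i \<oplus> \<ominus> s j \<in> V n" if "n \<le> i" "n \<le> j" for i j n
  proof -
    have "(s i \<oplus> \<ominus> s n) \<oplus> \<ominus> (s j \<oplus> \<ominus> s n) \<in> V n"
      using A[OF that(1)] A[OF that(2)] additive_subgroup.a_closed[OF sub[of n]]
        additive_subgroup.a_inv_closed[OF sub[of n]] by blast
    then show ?thesis using s by (simp add: alg2)
  qed
  define F where "F = filtermap s sequentially"
  have Fnb: "F \<noteq> bot" by (simp add: F_def filtermap_bot_iff)
  have Fc: "eventually (\<lambda>x. x \<in> carrier G) F" by (simp add: F_def eventually_filtermap s)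
  have Cau: "\<forall>U. openin T U \<and> \<zero> \<in> U \<longrightarrow> eventually (\<lambda>(x, y). x \<ominus> y \<in> U) (F \<times>\<^sub>F F)"
  proof (intro allI impI)
    fix U assume "openin T U \<and> \<zero> \<in> U"
    then obtain n where n: "V n \<subseteq> U" using V unfolding nbasis_def by blast
    have ev: "eventually (\<lambda>x. \<exists>i\<ge>n. x = s i) F"
      unfolding F_def eventually_filtermap eventually_sequentially by blast
    show "eventually (\<lambda>(x, y). x \<ominus> y \<in> U) (F \<times>\<^sub>F F)"
      unfolding eventually_prod_filter
      by (rule exI[of _ "\<lambda>x. \<exists>i\<ge>n. x = s i"], rule exI[of _ "\<lambda>x. \<exists>i\<ge>n. x = s i"])
        (use ev C n in \<open>auto simp: a_minus_def\<close>)
  qed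
  obtain l where l: "limitin T id l F"
    using compl Fnb Fc Cau unfolding complete_top_group_def by blast
  have lc: "l \<in> carrier G" using l top unfolding limitin_def by auto
  have ls: "limitin T s l sequentially"
    using l unfolding limitin_def F_def eventually_filtermap by simp
  have "l \<oplus> \<ominus> s n \<in> V n" for n
  proof -
    have "limitin T ((\<lambda>x. \<ominus> s n \<oplus> x) \<circ> s) (\<ominus> s n \<oplus> l) sequentially"
      by (rule continuous_map_limit[OF trans_cont ls]) (use s in simp)
    moreover have "eventually (\<lambda>m. ((\<lambda>x. \<ominus> s n \<oplus> x) \<circ> s) m \<in> V n) sequentially"
      unfolding eventually_sequentially using A s by (auto simp: a_comm)
    ultimately have "\<ominus> s n \<oplus> l \<in> V n"
      using limitin_closedin sub_closed[OF op sub] by (metis trivial_limit_sequentially)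
    then show ?thesis using s lc by (simp add: a_comm)
  qed
  then show ?thesis using lc ls by blast
qed

end

locale tgh = M: tg M TM + N: tg N TN for M (structure) and TM and N and TN +
  fixes f
  assumes fcar: "\<And>x. x \<in> carrier M \<Longrightarrow> f x \<in> carrier N"
  and fhom: "\<And>x y. x \<in> carrier M \<Longrightarrow> y \<in> carrier M \<Longrightarrow> f (x \<oplus> y) = f x \<oplus>\<^bsub>N\<^esub> f y"
  and fcont: "continuous_map TM TN f"
begin

sublocale H: abelian_group_hom M N f
  by (intro abelian_group_homI M.abelian_group_axioms N.abelian_group_axioms group_hom.intro
      M.a_group N.a_group group_hom_axioms.intro homI) (auto simp: fcar fhom)

definition "VB = (SOME V. M.nbasis V)"
definition "WB = (SOME W. N.nbasis W)"
lemma VB: "M.nbasis VB" using M.nbasis_exists someI_ex unfolding VB_def by metis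
lemma WB: "N.nbasis WB" using N.nbasis_exists someI_ex unfolding WB_def by metis

definition "OPEN \<longleftrightarrow> (\<forall>j. \<exists>k. f ` carrier M \<inter> WB k \<subseteq> f ` VB j)"

definition "Fib x = {y \<in> carrier M. f y = f x}"

lemma coset_fib: "x \<in> carrier M \<Longrightarrow> a_kernel M N f +> x = Fib x"
proof -
  assume x: "x \<in> carrier M"
  have A: "y \<in> Fib x" if yin: "y \<in> a_kernel M N f +> x" for y
  proof -
    obtain h where h: "h \<in> carrier M" "f h = \<zero>\<^bsub>N\<^esub>" "y = h \<oplus> x"
      using yin unfolding a_r_coset_def' a_kernel_def' by auto
    then show "y \<in> Fib x" using x fcar unfolding Fib_def by auto
  qed

  have B: "y \<in> a_kernel M N f +> x" if "y \<in> Fib x" for y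
  proof -
    have y: "y \<in> carrier M" "f y = f x" using that unfolding Fib_def by auto
    have "f (y \<oplus> \<ominus> x) = \<zero>\<^bsub>N\<^esub>" using x y fcar by (simp add: N.r_neg)
    then have km: "y \<oplus> \<ominus> x \<in> a_kernel M N f" unfolding a_kernel_def' using x y by simp
    have "(y \<oplus> \<ominus> x) \<oplus> x = y" using x y by (simp add: M.a_assoc M.l_neg)
    then show "y \<in> a_kernel M N f +> x"
      unfolding a_r_coset_def' by (intro UN_I[OF km]) simp
  qed
  from A B show ?thesis by blast
qed

lemma cosets_fib: "A_RCOSETS M (a_kernel M N f) = Fib ` carrier M"
  unfolding A_RCOSETS_def' using coset_fib by auto

lemma phi_fib: "x \<in> carrier M \<Longrightarrow> f (SOME y. y \<in> Fib x) = f x"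
proof -
  assume x: "x \<in> carrier M"
  then have "x \<in> Fib x" unfolding Fib_def by simp
  then have "(SOME y. y \<in> Fib x) \<in> Fib x" by (rule someI)
  then show ?thesis unfolding Fib_def by simp
qed

lemma fib_eq: "x \<in> carrier M \<Longrightarrow> y \<in> carrier M \<Longrightarrow> z \<in> Fib x \<Longrightarrow> z \<in> Fib y \<Longrightarrow> Fib x = Fib y"
  unfolding Fib_def by auto

lemma istop: "istopology (\<lambda>U. U \<subseteq> Fib ` carrier M \<and> openin TM (\<Union>U))"
  unfolding istopology_def
proof (rule conjI; intro allI impI)
  fix S T assume S: "S \<subseteq> Fib ` carrier M \<and> openin TM (\<Union>S)" and T: "T \<subseteq> Fib ` carrier M \<and> openin TM (\<Union>T)"
  have "\<Union>(S \<inter> T) = \<Union>S \<inter> \<Union>T"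
  proof
    show "\<Union>S \<inter> \<Union>T \<subseteq> \<Union>(S \<inter> T)"
    proof
      fix z assume "z \<in> \<Union>S \<inter> \<Union>T"
      then obtain C D where CD: "C \<in> S" "D \<in> T" "z \<in> C" "z \<in> D" by auto
      then obtain a b where ab: "a \<in> carrier M" "b \<in> carrier M" "C = Fib a" "D = Fib b" using S T by blast
      have "Fib a = Fib b" using fib_eq[of a b z] ab CD by simp
      then have "C \<in> S \<inter> T" using ab CD by simp
      then show "z \<in> \<Union>(S \<inter> T)" using CD by blast
    qed
  qed auto
  moreover have "openin TM (\<Union>S \<inter> \<Union>T)" using S T by (intro openin_Int) simp_all
  moreover have "S \<inter> T \<subseteq> Fib ` carrier M" using S by blast
  ultimately show "S \<inter> T \<subseteq> Fib ` carrier M \<and> openin TM (\<Union>(S \<inter> T))" by simp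
next
  fix K assume K: "\<forall>U\<in>K. U \<subseteq> Fib ` carrier M \<and> openin TM (\<Union>U)"
  have "\<Union>(\<Union>K) = \<Union>(Union ` K)" by auto
  moreover have "openin TM (\<Union>(Union ` K))" using K by (intro openin_Union) blast
  moreover have "\<Union>K \<subseteq> Fib ` carrier M" using K by blast
  ultimately show "\<Union>K \<subseteq> Fib ` carrier M \<and> openin TM (\<Union>(\<Union>K))" by simp
qed

lemma qopen: "openin (quotient_top TM (Fib ` carrier M)) U \<longleftrightarrow> U \<subseteq> Fib ` carrier M \<and> openin TM (\<Union>U)"
  unfolding quotient_top_def using istop by simp

lemma unionP: "\<Union>(Fib ` carrier M) = carrier M"
  unfolding Fib_def by auto

lemma qtop: "topspace (quotient_top TM (Fib ` carrier M)) = Fib ` carrier M"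
proof -
  have o: "openin (quotient_top TM (Fib ` carrier M)) (Fib ` carrier M)"
    unfolding qopen unionP using M.top by (metis openin_topspace order_refl)
  have "topspace (quotient_top TM (Fib ` carrier M)) = \<Union>{U. openin (quotient_top TM (Fib ` carrier M)) U}"
    by (simp add: topspace_def)
  also have "... = Fib ` carrier M"
  proof
    show "\<Union>{U. openin (quotient_top TM (Fib ` carrier M)) U} \<subseteq> Fib ` carrier M"
      unfolding qopen by blast
    show "Fib ` carrier M \<subseteq> \<Union>{U. openin (quotient_top TM (Fib ` carrier M)) U}"
      using o by blast
  qed
  finally show ?thesis .
qed

abbreviation "Q \<equiv> quotient_top TM (Fib ` carrier M)"
abbreviation "L \<equiv> f ` carrier M"
abbreviation "phi \<equiv> (\<lambda>C. f (SOME x. x \<in> C))"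

lemma VBp: "openin TM (VB j)" "additive_subgroup (VB j) M"
  using VB unfolding M.nbasis_def by blast+
lemma WBp: "openin TN (WB j)" "additive_subgroup (WB j) N"
  using WB unfolding N.nbasis_def by blast+
lemma VBc: "VB j \<subseteq> carrier M" using VBp(2) additive_subgroup.a_subset by blast
lemma WBc: "WB j \<subseteq> carrier N" using WBp(2) additive_subgroup.a_subset by blast

lemma strict_OPEN: assumes HM: "homeomorphic_map Q (subtopology TN L) phi" shows OPEN
  unfolding OPEN_def
proof
  fix j
  let ?V = "VB j"
  interpret V: additive_subgroup ?V M by (rule VBp(2))
  have "openin TM (\<Union>(Fib ` ?V))"
  proof (subst openin_subopen, intro ballI)
    fix y assume "y \<in> \<Union>(Fib ` ?V)"
    then obtain v where v: "v \<in> ?V" "y \<in> Fib v" by blast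
    then have y: "y \<in> carrier M" "f y = f v" unfolding Fib_def by auto
    have vc: "v \<in> carrier M" using v VBc by blast
    let ?N = "{z \<in> carrier M. \<ominus> y \<oplus> z \<in> ?V}"
    have "openin TM ?N" using M.pre_open[OF VBp(1)] y by auto
    moreover have "y \<in> ?N" using y by (simp add: M.l_neg)
    moreover have "?N \<subseteq> \<Union>(Fib ` ?V)"
    proof
      fix z assume z: "z \<in> ?N"
      let ?w = "\<ominus> y \<oplus> z"
      have zc: "z \<in> carrier M" using z by simp
      have "f z = f (y \<oplus> ?w)" using y zc by (simp add: M.r_neg2)
      also have "... = f v \<oplus>\<^bsub>N\<^esub> f ?w" using y zc by simp
      also have "... = f (v \<oplus> ?w)" using vc y zc by simp
      finally have "z \<in> Fib (v \<oplus> ?w)" unfolding Fib_def using zc by simp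
      moreover have "v \<oplus> ?w \<in> ?V" using v z by auto
      ultimately show "z \<in> \<Union>(Fib ` ?V)" by blast
    qed
    ultimately show "\<exists>T. openin TM T \<and> y \<in> T \<and> T \<subseteq> \<Union>(Fib ` ?V)" by blast
  qed
  moreover have "Fib ` ?V \<subseteq> Fib ` carrier M" using VBc by blast
  ultimately have "openin Q (Fib ` ?V)" unfolding qopen by blast
  then have "openin (subtopology TN L) (phi ` Fib ` ?V)"
    using homeomorphic_imp_open_map[OF HM] unfolding open_map_def by blast
  moreover have "phi ` Fib ` ?V = f ` ?V"
  proof -
    have "phi (Fib v) = f v" if "v \<in> ?V" for v using phi_fib VBc that by blast
    then show ?thesis unfolding image_image by (rule image_cong[OF refl])
  qed
  ultimately have "openin (subtopology TN L) (f ` ?V)" by simp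
  then obtain O' where O': "openin TN O'" "f ` ?V = O' \<inter> L"
    unfolding openin_subtopology by blast
  have "f \<zero> \<in> f ` ?V" by (rule imageI[OF V.zero_closed])
  then have "f \<zero> \<in> O' \<inter> L" by (simp only: O'(2))
  then have "\<zero>\<^bsub>N\<^esub> \<in> O'" by simp
  then obtain k where k: "WB k \<subseteq> O'" using WB O'(1) unfolding N.nbasis_def by blast
  have "L \<inter> WB k \<subseteq> O' \<inter> L" using k by blast
  then show "\<exists>k. L \<inter> WB k \<subseteq> f ` ?V" unfolding O'(2)[symmetric] by blast
qed

lemma fopen: assumes OP: OPEN and S: "openin TM S" shows "openin (subtopology TN L) (f ` S)"
proof (subst openin_subopen, intro ballI)
  fix y assume "y \<in> f ` S"
  then obtain x where x: "x \<in> S" "y = f x" by blast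
  have xc: "x \<in> carrier M" using x S openin_subset M.top by blast
  have "openin TM {z \<in> carrier M. x \<oplus> z \<in> S}" "\<zero> \<in> {z \<in> carrier M. x \<oplus> z \<in> S}"
    using M.pre_open[OF S xc] x xc by auto
  then obtain j where j: "VB j \<subseteq> {z \<in> carrier M. x \<oplus> z \<in> S}" using VB unfolding M.nbasis_def by blast
  obtain k where k: "L \<inter> WB k \<subseteq> f ` VB j" using OP unfolding OPEN_def by blast
  let ?T = "{u \<in> carrier N. \<ominus>\<^bsub>N\<^esub> f x \<oplus>\<^bsub>N\<^esub> u \<in> WB k} \<inter> L"
  have "openin TN {u \<in> carrier N. \<ominus>\<^bsub>N\<^esub> f x \<oplus>\<^bsub>N\<^esub> u \<in> WB k}"
    using N.pre_open[OF WBp(1), of "\<ominus>\<^bsub>N\<^esub> f x"] xc fcar by simp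
  then have "openin (subtopology TN L) ?T" unfolding openin_subtopology by blast
  moreover have "y \<in> ?T" using x xc fcar additive_subgroup.zero_closed[OF WBp(2)] by (simp add: N.l_neg)
  moreover have "?T \<subseteq> f ` S"
  proof
    fix u assume u: "u \<in> ?T"
    then obtain z where z: "z \<in> carrier M" "u = f z" by blast
    have "f (\<ominus> x \<oplus> z) = \<ominus>\<^bsub>N\<^esub> f x \<oplus>\<^bsub>N\<^esub> f z" using xc z by simp
    then have "f (\<ominus> x \<oplus> z) \<in> L \<inter> WB k" using u z xc by (metis IntI imageI M.a_closed M.a_inv_closed mem_Collect_eq IntD1)
    then obtain v where v: "v \<in> VB j" "f v = f (\<ominus> x \<oplus> z)" using k by (metis image_iff subsetD)
    have vc: "v \<in> carrier M" using v VBc by blast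
    have "x \<oplus> v \<in> S" using j v by blast
    moreover have "f (x \<oplus> v) = u" using v xc vc z by (simp add: N.r_neg2)
    ultimately show "u \<in> f ` S" by (metis imageI)
  qed
  ultimately show "\<exists>T. openin (subtopology TN L) T \<and> y \<in> T \<and> T \<subseteq> f ` S" by blast
qed


lemma OPEN_strict: assumes OP: OPEN shows "homeomorphic_map Q (subtopology TN L) phi"
proof (rule bijective_open_imp_homeomorphic_map)
  show "continuous_map Q (subtopology TN L) phi"
    unfolding continuous_map_def qtop
  proof (intro conjI allI impI Pi_I)
    fix C assume "C \<in> Fib ` carrier M"
    then show "phi C \<in> topspace (subtopology TN L)" using phi_fib fcar N.top by auto
  next
    fix U assume "openin (subtopology TN L) U"
    then obtain O' where O': "openin TN O'" "U = O' \<inter> L" unfolding openin_subtopology by auto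
    have "\<Union>{C \<in> Fib ` carrier M. phi C \<in> U} = {x \<in> topspace TM. f x \<in> O'}"
    proof
      show "\<Union>{C \<in> Fib ` carrier M. phi C \<in> U} \<subseteq> {x \<in> topspace TM. f x \<in> O'}"
        using phi_fib O'(2) M.top unfolding Fib_def by auto
      show "{x \<in> topspace TM. f x \<in> O'} \<subseteq> \<Union>{C \<in> Fib ` carrier M. phi C \<in> U}"
      proof
        fix x assume "x \<in> {x \<in> topspace TM. f x \<in> O'}"
        then have x: "x \<in> carrier M" "f x \<in> O'" using M.top by auto
        then have "Fib x \<in> {C \<in> Fib ` carrier M. phi C \<in> U}" using phi_fib O'(2) by auto
        moreover have "x \<in> Fib x" using x unfolding Fib_def by simp
        ultimately show "x \<in> \<Union>{C \<in> Fib ` carrier M. phi C \<in> U}" by blast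
      qed
    qed
    then show "openin Q {C \<in> Fib ` carrier M. phi C \<in> U}"
      unfolding qopen using openin_continuous_map_preimage[OF fcont O'(1)] by auto
  qed
  show "open_map Q (subtopology TN L) phi"
    unfolding open_map_def
  proof (intro allI impI)
    fix U assume "openin Q U"
    then have U: "U \<subseteq> Fib ` carrier M" "openin TM (\<Union>U)" unfolding qopen by auto
    have "phi ` U = f ` \<Union>U"
    proof
      show "phi ` U \<subseteq> f ` \<Union>U"
      proof
        fix y assume "y \<in> phi ` U"
        then obtain C where C: "C \<in> U" "y = phi C" by blast
        then obtain a where a: "a \<in> carrier M" "C = Fib a" using U by blast
        then have "a \<in> C" unfolding Fib_def by simp
        then show "y \<in> f ` \<Union>U" using C a phi_fib by blast
      qed
      show "f ` \<Union>U \<subseteq> phi ` U"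
      proof
        fix y assume "y \<in> f ` \<Union>U"
        then obtain z C where zC: "z \<in> C" "C \<in> U" "y = f z" by blast
        then obtain a where a: "a \<in> carrier M" "C = Fib a" using U by blast
        then have "y = phi C" using zC phi_fib unfolding Fib_def by auto
        then show "y \<in> phi ` U" using zC by blast
      qed
    qed
    then show "openin (subtopology TN L) (phi ` U)" using fopen[OF OP U(2)] by simp
  qed
  show "phi ` topspace Q = topspace (subtopology TN L)"
    unfolding qtop using phi_fib fcar N.top by (auto simp: image_image)
  show "inj_on phi (topspace Q)"
    unfolding qtop inj_on_def using phi_fib unfolding Fib_def by auto
qed
end

context abelian_group begin
lemma alg3: "a \<in> carrier G \<Longrightarrow> v \<in> carrier G \<Longrightarrow> (a \<oplus> v) \<oplus> \<ominus> a = v"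
  by (simp add: a_assoc a_comm[of v "\<ominus> a"] r_neg2)
lemma alg4: "a \<in> carrier G \<Longrightarrow> b \<in> carrier G \<Longrightarrow> a \<oplus> (b \<oplus> \<ominus> a) = b"
  by (simp add: a_comm[of b "\<ominus> a"] r_neg2)
lemma alg5: "a \<in> carrier G \<Longrightarrow> b \<in> carrier G \<Longrightarrow> c \<in> carrier G \<Longrightarrow> d \<in> carrier G \<Longrightarrow>
  (a \<oplus> \<ominus> b) \<oplus> \<ominus> (c \<oplus> \<ominus> d) = (a \<oplus> \<ominus> c) \<oplus> \<ominus> (b \<oplus> \<ominus> d)"
  by (simp add: minus_add a_ac)
lemma alg6: "z \<in> carrier G \<Longrightarrow> w \<in> carrier G \<Longrightarrow> c \<in> carrier G \<Longrightarrow> u \<in> carrier G \<Longrightarrow>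
  z \<oplus> w = c \<oplus> u \<Longrightarrow> (z \<oplus> \<ominus> c) \<oplus> \<ominus> u = \<ominus> w"
proof -
  assume c: "z \<in> carrier G" "w \<in> carrier G" "c \<in> carrier G" "u \<in> carrier G" and e: "z \<oplus> w = c \<oplus> u"
  have "\<ominus> w = z \<oplus> \<ominus> (z \<oplus> w)" using c by (simp add: minus_add r_neg2)
  also have "... = z \<oplus> \<ominus> (c \<oplus> u)" by (simp add: e)
  also have "... = (z \<oplus> \<ominus> c) \<oplus> \<ominus> u" using c by (simp add: minus_add a_assoc)
  finally show ?thesis by simp
qed
lemma alg7: "x \<in> carrier G \<Longrightarrow> a \<in> carrier G \<Longrightarrow> a \<oplus> \<ominus> (\<ominus> x \<oplus> a) = x"
  by (simp add: minus_add alg4)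
end


context tgh begin

lemma OPEN_closed: assumes OP: OPEN shows "closedin TN L"
proof -
  have Lsub: "L \<subseteq> topspace TN" using fcar N.top by blast
  have "\<forall>j. \<exists>k. L \<inter> WB k \<subseteq> f ` VB j" using OP unfolding OPEN_def .
  from choice[OF this] obtain kf where "\<forall>j. L \<inter> WB (kf j) \<subseteq> f ` VB j" by (elim exE)
  then have kf: "\<And>j. L \<inter> WB (kf j) \<subseteq> f ` VB j" by blast
  have "TN closure_of L \<subseteq> L"
  proof
    fix y assume y: "y \<in> TN closure_of L"
    have yc: "y \<in> carrier N" using subsetD[OF closure_of_subset_topspace y] N.top by simp
    from y[unfolded in_closure_of] have yp: "\<forall>T. y \<in> T \<and> openin TN T \<longrightarrow> (\<exists>z. z \<in> L \<and> z \<in> T)"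
      by (rule conjunct2)
    define K where "K i = i + kf i + (case i of 0 \<Rightarrow> 0 | Suc p \<Rightarrow> kf p)" for i
    have ex: "\<exists>x. x \<in> carrier M \<and> f x \<oplus>\<^bsub>N\<^esub> \<ominus>\<^bsub>N\<^esub> y \<in> WB (K n)" for n
    proof -
      have "y \<in> {u \<in> carrier N. \<ominus>\<^bsub>N\<^esub> y \<oplus>\<^bsub>N\<^esub> u \<in> WB (K n)}"
        using yc additive_subgroup.zero_closed[OF WBp(2)] by (simp add: N.l_neg)
      moreover have "openin TN {u \<in> carrier N. \<ominus>\<^bsub>N\<^esub> y \<oplus>\<^bsub>N\<^esub> u \<in> WB (K n)}"
        using N.pre_open[OF WBp(1)] yc by simp
      ultimately have "\<exists>z. z \<in> L \<and> z \<in> {u \<in> carrier N. \<ominus>\<^bsub>N\<^esub> y \<oplus>\<^bsub>N\<^esub> u \<in> WB (K n)}"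
        by (rule yp[rule_format, OF conjI])
      then obtain z where z: "z \<in> L" "\<ominus>\<^bsub>N\<^esub> y \<oplus>\<^bsub>N\<^esub> z \<in> WB (K n)" by blast
      from z(1) obtain x where x: "x \<in> carrier M" "z = f x" by (rule imageE)
      have "\<ominus>\<^bsub>N\<^esub> y \<oplus>\<^bsub>N\<^esub> f x = f x \<oplus>\<^bsub>N\<^esub> \<ominus>\<^bsub>N\<^esub> y" using x fcar yc by (simp add: N.a_comm)
      then have "f x \<oplus>\<^bsub>N\<^esub> \<ominus>\<^bsub>N\<^esub> y \<in> WB (K n)" using z x by simp
      then show ?thesis using x by blast
    qed
    have ex': "\<forall>n. \<exists>x. x \<in> carrier M \<and> f x \<oplus>\<^bsub>N\<^esub> \<ominus>\<^bsub>N\<^esub> y \<in> WB (K n)" by (intro allI ex)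
    from choice[OF ex'] obtain xs where "\<forall>n. xs n \<in> carrier M \<and> f (xs n) \<oplus>\<^bsub>N\<^esub> \<ominus>\<^bsub>N\<^esub> y \<in> WB (K n)"
      by (elim exE)
    then have xs: "\<And>n. xs n \<in> carrier M" "\<And>n. f (xs n) \<oplus>\<^bsub>N\<^esub> \<ominus>\<^bsub>N\<^esub> y \<in> WB (K n)" by blast+
    define l where "l i = f (xs i)" for i
    have lc: "l i \<in> carrier N" for i using xs fcar unfolding l_def by simp
    have exv: "\<exists>v. v \<in> VB i \<and> f v = l (Suc i) \<oplus>\<^bsub>N\<^esub> \<ominus>\<^bsub>N\<^esub> l i" for i
    proof -
      have eq: "l (Suc i) \<oplus>\<^bsub>N\<^esub> \<ominus>\<^bsub>N\<^esub> l i = f (xs (Suc i) \<oplus> \<ominus> xs i)" using xs unfolding l_def by simp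
      have "xs (Suc i) \<oplus> \<ominus> xs i \<in> carrier M" using xs by simp
      then have inL: "l (Suc i) \<oplus>\<^bsub>N\<^esub> \<ominus>\<^bsub>N\<^esub> l i \<in> L" unfolding eq by (rule imageI)
      have "K (Suc i) \<ge> kf i" "K i \<ge> kf i" by (simp_all add: K_def)
      then have s1: "WB (K (Suc i)) \<subseteq> WB (kf i)" "WB (K i) \<subseteq> WB (kf i)"
        using N.nbasis_mono[OF WB] by simp_all
      have a1: "f (xs (Suc i)) \<oplus>\<^bsub>N\<^esub> \<ominus>\<^bsub>N\<^esub> y \<in> WB (kf i)" using s1(1) xs(2) by (rule subsetD)
      have a2: "f (xs i) \<oplus>\<^bsub>N\<^esub> \<ominus>\<^bsub>N\<^esub> y \<in> WB (kf i)" using s1(2) xs(2) by (rule subsetD)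
      have "(l (Suc i) \<oplus>\<^bsub>N\<^esub> \<ominus>\<^bsub>N\<^esub> y) \<oplus>\<^bsub>N\<^esub> \<ominus>\<^bsub>N\<^esub> (l i \<oplus>\<^bsub>N\<^esub> \<ominus>\<^bsub>N\<^esub> y) \<in> WB (kf i)"
        unfolding l_def by (rule additive_subgroup.a_closed[OF WBp(2) a1 additive_subgroup.a_inv_closed[OF WBp(2) a2]])
      then have "l (Suc i) \<oplus>\<^bsub>N\<^esub> \<ominus>\<^bsub>N\<^esub> l i \<in> WB (kf i)" using lc yc by (simp add: N.alg2)
      then have "l (Suc i) \<oplus>\<^bsub>N\<^esub> \<ominus>\<^bsub>N\<^esub> l i \<in> L \<inter> WB (kf i)" using inL by (rule IntI[rotated])
      then have "l (Suc i) \<oplus>\<^bsub>N\<^esub> \<ominus>\<^bsub>N\<^esub> l i \<in> f ` VB i" using kf[of i] by (rule subsetD[rotated])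
      then obtain v where "v \<in> VB i" "l (Suc i) \<oplus>\<^bsub>N\<^esub> \<ominus>\<^bsub>N\<^esub> l i = f v" by (rule imageE)
      then show ?thesis by metis
    qed
    have exv': "\<forall>i. \<exists>v. v \<in> VB i \<and> f v = l (Suc i) \<oplus>\<^bsub>N\<^esub> \<ominus>\<^bsub>N\<^esub> l i" by (intro allI exv)
    from choice[OF exv'] obtain vs where "\<forall>i. vs i \<in> VB i \<and> f (vs i) = l (Suc i) \<oplus>\<^bsub>N\<^esub> \<ominus>\<^bsub>N\<^esub> l i"
      by (elim exE)
    then have vs: "\<And>i. vs i \<in> VB i" "\<And>i. f (vs i) = l (Suc i) \<oplus>\<^bsub>N\<^esub> \<ominus>\<^bsub>N\<^esub> l i" by blast+
    have vsc: "vs i \<in> carrier M" for i using vs VBc by blast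
    define s where "s = rec_nat (xs 0) (\<lambda>i si. si \<oplus> vs i)"
    have s0: "s 0 = xs 0" and sS: "s (Suc i) = s i \<oplus> vs i" for i unfolding s_def by simp_all
    have sc: "s i \<in> carrier M" for i
    proof (induction i)
      case 0 then show ?case using xs s0 by simp
    next
      case (Suc i) then show ?case using vsc sS by simp
    qed
    have fs: "f (s i) = l i" for i
    proof (induction i)
      case 0 then show ?case using s0 l_def by simp
    next
      case (Suc i)
      have "f (s (Suc i)) = l i \<oplus>\<^bsub>N\<^esub> (l (Suc i) \<oplus>\<^bsub>N\<^esub> \<ominus>\<^bsub>N\<^esub> l i)"
        using sS sc vsc Suc vs(2) by simp
      then show ?case using lc by (simp add: N.alg4)
    qed
    have "s (Suc i) \<oplus> \<ominus> s i \<in> VB i" for i using sS sc vsc vs(1) by (simp add: M.alg3)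
    then have "\<exists>l\<in>carrier M. limitin TM s l sequentially \<and> (\<forall>n. l \<oplus> \<ominus> s n \<in> VB n)"
      by (rule M.seq_complete[OF VB sc])
    then obtain x where x: "x \<in> carrier M" "limitin TM s x sequentially" by (elim bexE conjE)
    have lim1: "limitin TN (f \<circ> s) (f x) sequentially" by (rule continuous_map_limit[OF fcont x(2)])
    have lim2: "limitin TN (f \<circ> s) y sequentially"
    proof -
      have "\<forall>n. eventually (\<lambda>m. (f \<circ> s) m \<oplus>\<^bsub>N\<^esub> \<ominus>\<^bsub>N\<^esub> y \<in> WB n) sequentially"
      proof
        fix n
        have "(f \<circ> s) m \<oplus>\<^bsub>N\<^esub> \<ominus>\<^bsub>N\<^esub> y \<in> WB n" if "m \<ge> n" for m
        proof -
          have "K m \<ge> n" using that by (simp add: K_def)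
          then have "WB (K m) \<subseteq> WB n" by (rule N.nbasis_mono[OF WB])
          moreover have "(f \<circ> s) m \<oplus>\<^bsub>N\<^esub> \<ominus>\<^bsub>N\<^esub> y \<in> WB (K m)" using xs(2)[of m] fs[of m] unfolding l_def o_def by simp
          ultimately show ?thesis by (rule subsetD)
        qed
        then show "eventually (\<lambda>m. (f \<circ> s) m \<oplus>\<^bsub>N\<^esub> \<ominus>\<^bsub>N\<^esub> y \<in> WB n) sequentially"
          unfolding eventually_sequentially by (intro exI[of _ n] allI impI)
      qed
      moreover have "\<And>m. (f \<circ> s) m \<in> carrier N" using sc fcar by simp
      ultimately show ?thesis using N.lim_iff[OF WB yc, of "f \<circ> s"] by simp
    qed
    have "f x = y" by (rule limitin_Hausdorff_unique[OF lim1 lim2 sequentially_bot N.haus])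
    then show "y \<in> L" using x(1) by (metis imageI)
  qed
  then show ?thesis using Lsub closure_of_subset_eq by blast
qed

definition "Dset V = {y \<in> carrier N. \<forall>n. \<exists>v\<in>V. y \<oplus>\<^bsub>N\<^esub> \<ominus>\<^bsub>N\<^esub> f v \<in> WB n}"

lemma L_closed_add: "a \<in> L \<Longrightarrow> b \<in> L \<Longrightarrow> a \<oplus>\<^bsub>N\<^esub> \<ominus>\<^bsub>N\<^esub> b \<in> L"
proof -
  assume "a \<in> L" "b \<in> L"
  then obtain x z where xz: "x \<in> carrier M" "z \<in> carrier M" "a = f x" "b = f z" by blast
  then have "a \<oplus>\<^bsub>N\<^esub> \<ominus>\<^bsub>N\<^esub> b = f (x \<oplus> \<ominus> z)" by simp
  moreover have "x \<oplus> \<ominus> z \<in> carrier M" using xz by simp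
  ultimately show ?thesis by (metis imageI)
qed

lemma L_sub: "L \<subseteq> carrier N" using fcar by blast

lemma step2: assumes Hyp: "\<And>j. \<exists>k. L \<inter> WB k \<subseteq> Dset (VB j)" shows OPEN
  unfolding OPEN_def
proof
  fix j
  have "\<forall>j. \<exists>k. L \<inter> WB k \<subseteq> Dset (VB j)" using Hyp by blast
  from choice[OF this] obtain kk where "\<forall>j. L \<inter> WB (kk j) \<subseteq> Dset (VB j)" by (elim exE)
  then have kk: "\<And>j. L \<inter> WB (kk j) \<subseteq> Dset (VB j)" by blast
  have "L \<inter> WB (kk (Suc j)) \<subseteq> f ` VB j"
  proof
    fix y assume y: "y \<in> L \<inter> WB (kk (Suc j))"
    have yc: "y \<in> carrier N" using y L_sub by blast
    define g where "g i t n = (SOME v. v \<in> VB i \<and> t \<oplus>\<^bsub>N\<^esub> \<ominus>\<^bsub>N\<^esub> f v \<in> WB n)" for i t n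
    have g: "g i t n \<in> VB i \<and> t \<oplus>\<^bsub>N\<^esub> \<ominus>\<^bsub>N\<^esub> f (g i t n) \<in> WB n" if "t \<in> Dset (VB i)" for i t n
    proof -
      have "\<exists>v. v \<in> VB i \<and> t \<oplus>\<^bsub>N\<^esub> \<ominus>\<^bsub>N\<^esub> f v \<in> WB n" using that unfolding Dset_def by blast
      then show ?thesis unfolding g_def by (rule someI_ex)
    qed
    define m where "m i = max (kk (Suc j + Suc i)) i" for i
    define s where "s = rec_nat \<zero> (\<lambda>i si. si \<oplus> g (Suc j + i) (y \<oplus>\<^bsub>N\<^esub> \<ominus>\<^bsub>N\<^esub> f si) (m i))"
    define t where "t i = y \<oplus>\<^bsub>N\<^esub> \<ominus>\<^bsub>N\<^esub> f (s i)" for i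
    define v where "v i = g (Suc j + i) (t i) (m i)" for i
    have s0: "s 0 = \<zero>" and sS: "s (Suc i) = s i \<oplus> v i" for i unfolding s_def v_def t_def by simp_all
    have inv: "s i \<in> carrier M \<and> t i \<in> L \<inter> WB (kk (Suc j + i))" for i
    proof (induction i)
      case 0
      have "t 0 = y" unfolding t_def s0 using yc by simp
      then show ?case using s0 y by simp
    next
      case (Suc i)
      then have sc: "s i \<in> carrier M" and tD: "t i \<in> Dset (VB (Suc j + i))" using kk by blast+
      have vi: "v i \<in> VB (Suc j + i)" "t i \<oplus>\<^bsub>N\<^esub> \<ominus>\<^bsub>N\<^esub> f (v i) \<in> WB (m i)"
        using g[OF tD] unfolding v_def by blast+
      have vc: "v i \<in> carrier M" using vi(1) VBc by blast
      have sc': "s (Suc i) \<in> carrier M" using sS sc vc by simp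
      have teq: "t (Suc i) = t i \<oplus>\<^bsub>N\<^esub> \<ominus>\<^bsub>N\<^esub> f (v i)"
        unfolding t_def sS using sc vc yc fcar by (simp add: N.minus_add N.a_assoc)
      have "m i \<ge> kk (Suc j + Suc i)" unfolding m_def by simp
      then have "WB (m i) \<subseteq> WB (kk (Suc j + Suc i))" by (rule N.nbasis_mono[OF WB])
      then have "t (Suc i) \<in> WB (kk (Suc j + Suc i))" unfolding teq using vi(2) by (rule subsetD)
      moreover have "t i \<in> L" using Suc by blast
      then have "t (Suc i) \<in> L" unfolding teq by (rule L_closed_add) (rule imageI[OF vc])
      ultimately show ?case using sc' by simp
    qed
    have vprop: "v i \<in> VB (Suc j + i) \<and> t i \<oplus>\<^bsub>N\<^esub> \<ominus>\<^bsub>N\<^esub> f (v i) \<in> WB (m i)" for i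
    proof -
      have "t i \<in> Dset (VB (Suc j + i))" using inv[of i] kk by blast
      then show ?thesis using g unfolding v_def by blast
    qed
    have sc: "s i \<in> carrier M" for i using inv by blast
    have vc: "v i \<in> carrier M" for i using vprop VBc by blast
    have teq: "t (Suc i) = t i \<oplus>\<^bsub>N\<^esub> \<ominus>\<^bsub>N\<^esub> f (v i)" for i
      unfolding t_def sS using sc vc yc fcar by (simp add: N.minus_add N.a_assoc)
    have tW: "t (Suc i) \<in> WB i" for i
    proof -
      have "m i \<ge> i" unfolding m_def by simp
      then have "WB (m i) \<subseteq> WB i" by (rule N.nbasis_mono[OF WB])
      moreover have "t i \<oplus>\<^bsub>N\<^esub> \<ominus>\<^bsub>N\<^esub> f (v i) \<in> WB (m i)" using vprop by blast
      ultimately show ?thesis unfolding teq by (rule subsetD)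
    qed
    have B: "M.nbasis (\<lambda>i. VB (Suc j + i))" by (rule M.nbasis_sub[OF VB]) simp_all
    have "s (Suc i) \<oplus> \<ominus> s i \<in> VB (Suc j + i)" for i using sS sc vc vprop by (simp add: M.alg3)
    then have "\<exists>l\<in>carrier M. limitin TM s l sequentially \<and> (\<forall>n. l \<oplus> \<ominus> s n \<in> VB (Suc j + n))"
      by (rule M.seq_complete[OF B sc])
    then obtain x where x: "x \<in> carrier M" "limitin TM s x sequentially" "\<And>n. x \<oplus> \<ominus> s n \<in> VB (Suc j + n)"
      by blast
    have "\<ominus> \<zero> = \<zero>" by (metis M.r_neg M.l_zero M.zero_closed M.a_inv_closed)
    then have "x \<oplus> \<ominus> s 0 = x" unfolding s0 using x(1) by (metis M.r_zero)
    then have "x \<in> VB (Suc j)" using x(3)[of 0] by simp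
    moreover have "VB (Suc j) \<subseteq> VB j" by (rule M.nbasis_mono[OF VB]) simp
    ultimately have xV: "x \<in> VB j" by blast
    have lim1: "limitin TN (f \<circ> s) (f x) sequentially" by (rule continuous_map_limit[OF fcont x(2)])
    have lim2: "limitin TN (f \<circ> s) y sequentially"
    proof -
      have "\<forall>n. eventually (\<lambda>m. (f \<circ> s) m \<oplus>\<^bsub>N\<^esub> \<ominus>\<^bsub>N\<^esub> y \<in> WB n) sequentially"
      proof
        fix n
        have "(f \<circ> s) m \<oplus>\<^bsub>N\<^esub> \<ominus>\<^bsub>N\<^esub> y \<in> WB n" if "m \<ge> Suc n" for m
        proof -
          obtain p where p: "m = Suc p" "p \<ge> n" using \<open>m \<ge> Suc n\<close> by (cases m) auto
          have "WB p \<subseteq> WB n" using p(2) by (rule N.nbasis_mono[OF WB])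
          then have "t m \<in> WB n" using tW[of p] p(1) by blast
          then have "\<ominus>\<^bsub>N\<^esub> t m \<in> WB n" using additive_subgroup.a_inv_closed[OF WBp(2)] by blast
          moreover have "\<ominus>\<^bsub>N\<^esub> t m = (f \<circ> s) m \<oplus>\<^bsub>N\<^esub> \<ominus>\<^bsub>N\<^esub> y"
            unfolding t_def o_def using sc yc fcar by (simp add: N.minus_add N.a_comm)
          ultimately show ?thesis by simp
        qed
        then show "eventually (\<lambda>m. (f \<circ> s) m \<oplus>\<^bsub>N\<^esub> \<ominus>\<^bsub>N\<^esub> y \<in> WB n) sequentially"
          unfolding eventually_sequentially by (intro exI[of _ "Suc n"] allI impI)
      qed
      moreover have "\<And>m. (f \<circ> s) m \<in> carrier N" using sc fcar by simp
      ultimately show ?thesis using N.lim_iff[OF WB yc, of "f \<circ> s"] by simp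
    qed
    have "f x = y" by (rule limitin_Hausdorff_unique[OF lim1 lim2 sequentially_bot N.haus])
    then show "y \<in> f ` VB j" using xV by (metis imageI)
  qed
  then show "\<exists>k. L \<inter> WB k \<subseteq> f ` VB j" by blast
qed

end

context tgh begin

lemma L_add: "a \<in> L \<Longrightarrow> b \<in> L \<Longrightarrow> a \<oplus>\<^bsub>N\<^esub> b \<in> L"
proof -
  assume "a \<in> L" "b \<in> L"
  then obtain x z where xz: "x \<in> carrier M" "z \<in> carrier M" "a = f x" "b = f z" by blast
  then have "a \<oplus>\<^bsub>N\<^esub> b = f (x \<oplus> z)" by simp
  moreover have "x \<oplus> z \<in> carrier M" using xz by simp
  ultimately show ?thesis by (metis imageI)
qed

lemma cover:
  assumes Vo: "openin TM V" and Vs: "additive_subgroup V M"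
  obtains a :: "nat \<Rightarrow> 'a" where "\<And>i. a i \<in> carrier M" "\<And>x. x \<in> carrier M \<Longrightarrow> \<exists>i. \<exists>v\<in>V. x = a i \<oplus> v"
proof -
  interpret V: additive_subgroup V M by (rule Vs)
  obtain B where B: "countable B" "\<forall>b\<in>B. openin TM b"
    "\<forall>U x. openin TM U \<and> x \<in> U \<longrightarrow> (\<exists>b\<in>B. x \<in> b \<and> b \<subseteq> U)"
    using M.sc unfolding second_countable_def by blast
  have cx: "\<forall>x\<in>carrier M. \<exists>b. b \<in> B \<and> x \<in> b \<and> b \<subseteq> {z \<in> carrier M. \<ominus> x \<oplus> z \<in> V}"
  proof
    fix x assume x: "x \<in> carrier M"
    have "openin TM {z \<in> carrier M. \<ominus> x \<oplus> z \<in> V}" using M.pre_open[OF Vo] x by simp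
    moreover have "x \<in> {z \<in> carrier M. \<ominus> x \<oplus> z \<in> V}" using x by (simp add: M.l_neg)
    ultimately obtain b where "b \<in> B" "x \<in> b" "b \<subseteq> {z \<in> carrier M. \<ominus> x \<oplus> z \<in> V}"
      using B(3)[rule_format, OF conjI] by blast
    then show "\<exists>b. b \<in> B \<and> x \<in> b \<and> b \<subseteq> {z \<in> carrier M. \<ominus> x \<oplus> z \<in> V}" by blast
  qed
  from bchoice[OF cx] obtain c where c: "\<forall>x\<in>carrier M. c x \<in> B \<and> x \<in> c x \<and> c x \<subseteq> {z \<in> carrier M. \<ominus> x \<oplus> z \<in> V}"
    by (elim exE)
  define B0 where "B0 = c ` carrier M"
  have "B0 \<subseteq> B" unfolding B0_def using c by blast
  then have cB0: "countable B0" using B(1) by (rule countable_subset)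
  have B0ne: "B0 \<noteq> {}" unfolding B0_def using M.zero_closed by blast
  define a where "a i = inv_into (carrier M) c (from_nat_into B0 i)" for i
  have ac: "a i \<in> carrier M" for i
    unfolding a_def using from_nat_into[OF B0ne] unfolding B0_def by (rule inv_into_into)
  have cov: "\<exists>i. \<exists>v\<in>V. x = a i \<oplus> v" if x: "x \<in> carrier M" for x
  proof -
    have "c x \<in> B0" unfolding B0_def using x by (rule imageI)
    then obtain i where i: "from_nat_into B0 i = c x" using from_nat_into_surj[OF cB0] by blast
    have "c (a i) = c x" unfolding a_def i using x by (simp add: f_inv_into_f)
    moreover have "a i \<in> c (a i)" using bspec[OF c ac[of i]] by (elim conjE)
    ultimately have "a i \<in> c x" by simp
    moreover have "c x \<subseteq> {z \<in> carrier M. \<ominus> x \<oplus> z \<in> V}" using bspec[OF c x] by (elim conjE)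
    ultimately have "a i \<in> {z \<in> carrier M. \<ominus> x \<oplus> z \<in> V}" by (rule subsetD[rotated])
    then have "\<ominus> x \<oplus> a i \<in> V" by simp
    then have "\<ominus> (\<ominus> x \<oplus> a i) \<in> V" by (rule V.a_inv_closed)
    moreover have "x = a i \<oplus> \<ominus> (\<ominus> x \<oplus> a i)" by (rule M.alg7[OF x ac, symmetric])
    ultimately show ?thesis by (intro exI bexI)
  qed
  show thesis by (rule that[OF ac cov])
qed

lemma Dsub: assumes Vs: "additive_subgroup V M" and d: "d1 \<in> Dset V" "d2 \<in> Dset V"
  shows "d1 \<oplus>\<^bsub>N\<^esub> \<ominus>\<^bsub>N\<^esub> d2 \<in> Dset V"
proof -
  interpret V: additive_subgroup V M by (rule Vs)
  have dc: "d1 \<in> carrier N" "d2 \<in> carrier N" using d unfolding Dset_def by blast+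
  have "\<exists>v\<in>V. (d1 \<oplus>\<^bsub>N\<^esub> \<ominus>\<^bsub>N\<^esub> d2) \<oplus>\<^bsub>N\<^esub> \<ominus>\<^bsub>N\<^esub> f v \<in> WB n" for n
  proof -
    obtain v1 where v1: "v1 \<in> V" "d1 \<oplus>\<^bsub>N\<^esub> \<ominus>\<^bsub>N\<^esub> f v1 \<in> WB n" using d(1) unfolding Dset_def by blast
    obtain v2 where v2: "v2 \<in> V" "d2 \<oplus>\<^bsub>N\<^esub> \<ominus>\<^bsub>N\<^esub> f v2 \<in> WB n" using d(2) unfolding Dset_def by blast
    have vc: "v1 \<in> carrier M" "v2 \<in> carrier M" using v1 v2 by simp_all
    have "(d1 \<oplus>\<^bsub>N\<^esub> \<ominus>\<^bsub>N\<^esub> f v1) \<oplus>\<^bsub>N\<^esub> \<ominus>\<^bsub>N\<^esub> (d2 \<oplus>\<^bsub>N\<^esub> \<ominus>\<^bsub>N\<^esub> f v2) \<in> WB n"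
      by (rule additive_subgroup.a_closed[OF WBp(2) v1(2) additive_subgroup.a_inv_closed[OF WBp(2) v2(2)]])
    moreover have "(d1 \<oplus>\<^bsub>N\<^esub> \<ominus>\<^bsub>N\<^esub> f v1) \<oplus>\<^bsub>N\<^esub> \<ominus>\<^bsub>N\<^esub> (d2 \<oplus>\<^bsub>N\<^esub> \<ominus>\<^bsub>N\<^esub> f v2)
       = (d1 \<oplus>\<^bsub>N\<^esub> \<ominus>\<^bsub>N\<^esub> d2) \<oplus>\<^bsub>N\<^esub> \<ominus>\<^bsub>N\<^esub> f (v1 \<oplus> \<ominus> v2)"
      using dc vc fcar by (simp add: N.alg5)
    moreover have "v1 \<oplus> \<ominus> v2 \<in> V" using v1 v2 by simp
    ultimately show ?thesis by metis
  qed
  then show ?thesis unfolding Dset_def using dc by simp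
qed

lemma avoid: assumes z: "z \<in> carrier N" and c: "c \<in> carrier N" and V: "V \<subseteq> carrier M"
  and nd: "z \<oplus>\<^bsub>N\<^esub> \<ominus>\<^bsub>N\<^esub> c \<notin> Dset V"
  shows "\<exists>n. \<forall>w\<in>WB n. \<forall>v\<in>V. z \<oplus>\<^bsub>N\<^esub> w \<noteq> c \<oplus>\<^bsub>N\<^esub> f v"
proof -
  have "z \<oplus>\<^bsub>N\<^esub> \<ominus>\<^bsub>N\<^esub> c \<in> carrier N" using z c by simp
  then obtain n where n: "\<forall>v\<in>V. (z \<oplus>\<^bsub>N\<^esub> \<ominus>\<^bsub>N\<^esub> c) \<oplus>\<^bsub>N\<^esub> \<ominus>\<^bsub>N\<^esub> f v \<notin> WB n"
    using nd unfolding Dset_def by blast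
  have "\<forall>w\<in>WB n. \<forall>v\<in>V. z \<oplus>\<^bsub>N\<^esub> w \<noteq> c \<oplus>\<^bsub>N\<^esub> f v"
  proof (intro ballI notI)
    fix w v assume w: "w \<in> WB n" and v: "v \<in> V" and e: "z \<oplus>\<^bsub>N\<^esub> w = c \<oplus>\<^bsub>N\<^esub> f v"
    have "(z \<oplus>\<^bsub>N\<^esub> \<ominus>\<^bsub>N\<^esub> c) \<oplus>\<^bsub>N\<^esub> \<ominus>\<^bsub>N\<^esub> f v = \<ominus>\<^bsub>N\<^esub> w"
    proof (rule N.alg6[OF z _ c _ e])
      show "w \<in> carrier N" using w WBc by (rule subsetD[rotated])
      have "v \<in> carrier M" using v V by (rule subsetD[rotated])
      then show "f v \<in> carrier N" by (rule fcar)
    qed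
    moreover have "\<ominus>\<^bsub>N\<^esub> w \<in> WB n" using w by (rule additive_subgroup.a_inv_closed[OF WBp(2)])
    moreover have "(z \<oplus>\<^bsub>N\<^esub> \<ominus>\<^bsub>N\<^esub> c) \<oplus>\<^bsub>N\<^esub> \<ominus>\<^bsub>N\<^esub> f v \<notin> WB n" using n v by blast
    ultimately show False by metis
  qed
  then show ?thesis by blast
qed

lemma baire: assumes cl: "closedin TN L" and Vo: "openin TM V" and Vs: "additive_subgroup V M"
  shows "\<exists>k. L \<inter> WB k \<subseteq> Dset V"
proof (rule ccontr)
  assume NG: "\<not> (\<exists>k. L \<inter> WB k \<subseteq> Dset V)"
  interpret V: additive_subgroup V M by (rule Vs)
  have Vc: "V \<subseteq> carrier M" by (rule V.a_subset)
  obtain a :: "nat \<Rightarrow> 'a" where a: "\<And>i. a i \<in> carrier M"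
    and cov: "\<And>x. x \<in> carrier M \<Longrightarrow> \<exists>i. \<exists>v\<in>V. x = a i \<oplus> v"
    using cover[OF Vo Vs] by blast
  have NG': "\<exists>y. y \<in> L \<and> y \<in> WB k \<and> y \<notin> Dset V" for k using NG by blast
  have step: "\<exists>p. fst p \<in> L \<and> fst p \<oplus>\<^bsub>N\<^esub> \<ominus>\<^bsub>N\<^esub> z \<in> WB k \<and> Suc k \<le> snd p \<and>
      (\<forall>w\<in>WB (snd p). \<forall>v\<in>V. fst p \<oplus>\<^bsub>N\<^esub> w \<noteq> c \<oplus>\<^bsub>N\<^esub> f v)"
    if z: "z \<in> L" and c: "c \<in> L" for z c k
  proof -
    have zc: "z \<in> carrier N" using z L_sub by (rule subsetD[rotated])
    have cc: "c \<in> carrier N" using c L_sub by (rule subsetD[rotated])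
    have key: "\<exists>z'. z' \<in> L \<and> z' \<oplus>\<^bsub>N\<^esub> \<ominus>\<^bsub>N\<^esub> z \<in> WB k \<and> z' \<oplus>\<^bsub>N\<^esub> \<ominus>\<^bsub>N\<^esub> c \<notin> Dset V"
    proof (cases "z \<oplus>\<^bsub>N\<^esub> \<ominus>\<^bsub>N\<^esub> c \<in> Dset V")
      case False
      have "z \<oplus>\<^bsub>N\<^esub> \<ominus>\<^bsub>N\<^esub> z \<in> WB k" using zc additive_subgroup.zero_closed[OF WBp(2)] by (simp add: N.r_neg)
      then show ?thesis using z False by blast
    next
      case True
      obtain y where y: "y \<in> L" "y \<in> WB k" "y \<notin> Dset V" using NG'[of k] by blast
      have yc: "y \<in> carrier N" using y(1) L_sub by (rule subsetD[rotated])
      have h1: "z \<oplus>\<^bsub>N\<^esub> y \<in> L" by (rule L_add[OF z y(1)])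
      have e1: "(z \<oplus>\<^bsub>N\<^esub> y) \<oplus>\<^bsub>N\<^esub> \<ominus>\<^bsub>N\<^esub> z = y" using zc yc by (rule N.alg3)
      have h2: "(z \<oplus>\<^bsub>N\<^esub> y) \<oplus>\<^bsub>N\<^esub> \<ominus>\<^bsub>N\<^esub> z \<in> WB k" unfolding e1 by (rule y(2))
      have h3: "(z \<oplus>\<^bsub>N\<^esub> y) \<oplus>\<^bsub>N\<^esub> \<ominus>\<^bsub>N\<^esub> c \<notin> Dset V"
      proof
        assume "(z \<oplus>\<^bsub>N\<^esub> y) \<oplus>\<^bsub>N\<^esub> \<ominus>\<^bsub>N\<^esub> c \<in> Dset V"
        then have "((z \<oplus>\<^bsub>N\<^esub> y) \<oplus>\<^bsub>N\<^esub> \<ominus>\<^bsub>N\<^esub> c) \<oplus>\<^bsub>N\<^esub> \<ominus>\<^bsub>N\<^esub> (z \<oplus>\<^bsub>N\<^esub> \<ominus>\<^bsub>N\<^esub> c) \<in> Dset V"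
          using True by (rule Dsub[OF Vs])
        moreover have "((z \<oplus>\<^bsub>N\<^esub> y) \<oplus>\<^bsub>N\<^esub> \<ominus>\<^bsub>N\<^esub> c) \<oplus>\<^bsub>N\<^esub> \<ominus>\<^bsub>N\<^esub> (z \<oplus>\<^bsub>N\<^esub> \<ominus>\<^bsub>N\<^esub> c) = (z \<oplus>\<^bsub>N\<^esub> y) \<oplus>\<^bsub>N\<^esub> \<ominus>\<^bsub>N\<^esub> z"
          by (rule N.alg2) (use zc yc cc in simp_all)
        ultimately show False using y(3) e1 by simp
      qed
      show ?thesis by (intro exI[of _ "z \<oplus>\<^bsub>N\<^esub> y"] conjI h1 h2 h3)
    qed
    then obtain z' where z': "z' \<in> L" "z' \<oplus>\<^bsub>N\<^esub> \<ominus>\<^bsub>N\<^esub> z \<in> WB k" "z' \<oplus>\<^bsub>N\<^esub> \<ominus>\<^bsub>N\<^esub> c \<notin> Dset V"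
      by (elim exE conjE)
    have z'c: "z' \<in> carrier N" using z'(1) L_sub by (rule subsetD[rotated])
    obtain n where n: "\<forall>w\<in>WB n. \<forall>v\<in>V. z' \<oplus>\<^bsub>N\<^esub> w \<noteq> c \<oplus>\<^bsub>N\<^esub> f v"
      using avoid[OF z'c cc Vc z'(3)] by (elim exE)
    have "WB (max n (Suc k)) \<subseteq> WB n" by (rule N.nbasis_mono[OF WB]) simp
    then have n': "\<forall>w\<in>WB (max n (Suc k)). \<forall>v\<in>V. z' \<oplus>\<^bsub>N\<^esub> w \<noteq> c \<oplus>\<^bsub>N\<^esub> f v" using n by blast
    show ?thesis
    proof (rule exI[of _ "(z', max n (Suc k))"])
      show "fst (z', max n (Suc k)) \<in> L \<and> fst (z', max n (Suc k)) \<oplus>\<^bsub>N\<^esub> \<ominus>\<^bsub>N\<^esub> z \<in> WB k \<and> Suc k \<le> snd (z', max n (Suc k)) \<and>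
        (\<forall>w\<in>WB (snd (z', max n (Suc k))). \<forall>v\<in>V. fst (z', max n (Suc k)) \<oplus>\<^bsub>N\<^esub> w \<noteq> c \<oplus>\<^bsub>N\<^esub> f v)"
        using z'(1,2) n' by simp
    qed
  qed
  define P where "P i p p' \<longleftrightarrow> fst p' \<in> L \<and> fst p' \<oplus>\<^bsub>N\<^esub> \<ominus>\<^bsub>N\<^esub> fst p \<in> WB (snd p) \<and> Suc (snd p) \<le> snd p' \<and>
      (\<forall>w\<in>WB (snd p'). \<forall>v\<in>V. fst p' \<oplus>\<^bsub>N\<^esub> w \<noteq> f (a i) \<oplus>\<^bsub>N\<^esub> f v)" for i and p p' :: "'c \<times> nat"
  have Pex: "\<exists>p'. P i p p'" if "fst p \<in> L" for i p
  proof -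
    have "f (a i) \<in> L" by (rule imageI[OF a])
    from step[OF that this, of "snd p"] show ?thesis unfolding P_def .
  qed
  define sq where "sq = rec_nat (\<zero>\<^bsub>N\<^esub>, 0::nat) (\<lambda>i p. SOME p'. P i p p')"
  have sq0: "sq 0 = (\<zero>\<^bsub>N\<^esub>, 0)" and sqS: "sq (Suc i) = (SOME p'. P i (sq i) p')" for i
    unfolding sq_def by simp_all
  have inL: "fst (sq i) \<in> L" for i
  proof (induction i)
    case 0
    have "f \<zero> \<in> L" by (rule imageI) simp
    then show ?case by (simp add: sq0)
  next
    case (Suc i)
    have "P i (sq i) (SOME p'. P i (sq i) p')" by (rule someI_ex[OF Pex[OF Suc.IH]])
    then show ?case unfolding sqS P_def by (elim conjE)
  qed
  have Pi: "P i (sq i) (sq (Suc i))" for i unfolding sqS by (rule someI_ex[OF Pex[OF inL]])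
  define z where "z i = fst (sq i)" for i
  define k where "k i = snd (sq i)" for i
  have P1: "z (Suc i) \<oplus>\<^bsub>N\<^esub> \<ominus>\<^bsub>N\<^esub> z i \<in> WB (k i)" "Suc (k i) \<le> k (Suc i)"
    "\<forall>w\<in>WB (k (Suc i)). \<forall>v\<in>V. z (Suc i) \<oplus>\<^bsub>N\<^esub> w \<noteq> f (a i) \<oplus>\<^bsub>N\<^esub> f v" for i
    using Pi[of i] unfolding P_def z_def k_def by blast+
  have kmono: "k i \<le> k (Suc i)" for i using P1(2)[of i] by simp
  have kge: "i \<le> k i" for i
  proof (induction i)
    case 0 show ?case by simp
  next
    case (Suc i) show ?case using Suc P1(2)[of i] by simp
  qed
  have U: "N.nbasis (\<lambda>i. WB (k i))" by (rule N.nbasis_sub[OF WB kmono kge])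
  have zc: "z i \<in> carrier N" for i using inL[of i] L_sub unfolding z_def by (rule subsetD[rotated])
  have "\<exists>l\<in>carrier N. limitin TN z l sequentially \<and> (\<forall>n. l \<oplus>\<^bsub>N\<^esub> \<ominus>\<^bsub>N\<^esub> z n \<in> WB (k n))"
    by (rule N.seq_complete[OF U zc P1(1)])
  then obtain zz where zz: "zz \<in> carrier N" "limitin TN z zz sequentially" "\<forall>n. zz \<oplus>\<^bsub>N\<^esub> \<ominus>\<^bsub>N\<^esub> z n \<in> WB (k n)"
    by (elim bexE conjE)
  have "eventually (\<lambda>i. z i \<in> L) sequentially" unfolding z_def using inL by (intro always_eventually allI)
  then have "zz \<in> L" by (rule limitin_closedin[OF zz(2) cl _ sequentially_bot])
  then obtain x where x: "zz = f x" "x \<in> carrier M" by (rule imageE)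
  obtain i v where iv: "v \<in> V" "x = a i \<oplus> v" using cov[OF x(2)] by (elim exE bexE)
  have vc: "v \<in> carrier M" using iv(1) Vc by (rule subsetD[rotated])
  have e1: "zz = f (a i) \<oplus>\<^bsub>N\<^esub> f v" unfolding x(1) iv(2) using a vc by simp
  define w where "w = zz \<oplus>\<^bsub>N\<^esub> \<ominus>\<^bsub>N\<^esub> z (Suc i)"
  have wW: "w \<in> WB (k (Suc i))" unfolding w_def using zz(3) by blast
  have e2: "z (Suc i) \<oplus>\<^bsub>N\<^esub> w = zz" unfolding w_def using zc zz(1) by (rule N.alg4)
  have "z (Suc i) \<oplus>\<^bsub>N\<^esub> w \<noteq> f (a i) \<oplus>\<^bsub>N\<^esub> f v" using P1(3)[of i] wW iv(1) by blast
  then show False using e1 e2 by simp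
qed

lemma closed_OPEN: assumes cl: "closedin TN L" shows OPEN
proof (rule step2)
  fix j
  show "\<exists>k. L \<inter> WB k \<subseteq> Dset (VB j)" by (rule baire[OF cl VBp(1) VBp(2)])
qed

end

lemma td_tg: assumes "complete_td_module R TR M TM" shows "tg M TM"
proof -
  from assms have lm: "left_module R M" and top: "topspace TM = carrier M"
    and addc: "continuous_map (prod_topology TM TM) TM (\<lambda>(x, y). x \<oplus>\<^bsub>M\<^esub> y)"
    and negc: "continuous_map TM TM (\<lambda>x. \<ominus>\<^bsub>M\<^esub> x)"
    and haus: "Hausdorff_space TM" and compl: "complete_top_group M TM"
    and nb: "\<forall>U. openin TM U \<and> \<zero>\<^bsub>M\<^esub> \<in> U \<longrightarrow> (\<exists>V. openin TM V \<and> submodule V R M \<and> V \<subseteq> U)"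
    and sc: "second_countable TM"
    unfolding complete_td_module_def topological_module_def by blast+
  have ag: "abelian_group M" using lm unfolding left_module_def by blast
  have nb': "\<forall>U. openin TM U \<and> \<zero>\<^bsub>M\<^esub> \<in> U \<longrightarrow> (\<exists>V. openin TM V \<and> additive_subgroup V M \<and> V \<subseteq> U)"
  proof (intro allI impI)
    fix U assume "openin TM U \<and> \<zero>\<^bsub>M\<^esub> \<in> U"
    then obtain V where V: "openin TM V" "submodule V R M" "V \<subseteq> U" using nb by blast
    have "additive_subgroup V M" using submodule.axioms(1)[OF V(2)] by (rule additive_subgroup.intro)
    then show "\<exists>V. openin TM V \<and> additive_subgroup V M \<and> V \<subseteq> U" using V by blast
  qed
  show ?thesis
    by (intro tg.intro ag tg_axioms.intro top addc negc haus compl nb' sc)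
qed

theorem proposition1p1:
  fixes R :: "('r, 'x) ring_scheme" and TR :: "'r topology"
    and M :: "('r, 'm) module" and TM :: "'m topology"
    and N :: "('r, 'n) module" and TN :: "'n topology"
    and f :: "'m \<Rightarrow> 'n"
  assumes "topological_ring R TR" and "compact_space TR" and "Hausdorff_space TR"
    and "first_countable TR"
    and "complete_td_module R TR M TM" and "complete_td_module R TR N TN"
    and "lmodule_hom R M N f" and "continuous_map TM TN f"
  shows "strict_hom M TM N TN f \<longleftrightarrow> closedin TN (f ` carrier M)"
proof -
  have tM: "tg M TM" by (rule td_tg[OF assms(5)])
  have tN: "tg N TN" by (rule td_tg[OF assms(6)])
  have fcar: "\<And>x. x \<in> carrier M \<Longrightarrow> f x \<in> carrier N" and
    fhom: "\<And>x y. x \<in> carrier M \<Longrightarrow> y \<in> carrier M \<Longrightarrow> f (x \<oplus>\<^bsub>M\<^esub> y) = f x \<oplus>\<^bsub>N\<^esub> f y"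
    using assms(7) unfolding lmodule_hom_def by blast+
  have "tgh M TM N TN f"
    by (intro tgh.intro tM tN tgh_axioms.intro fcar fhom assms(8))
  then interpret H: tgh M TM N TN f .
  have eq: "strict_hom M TM N TN f \<longleftrightarrow>
    homeomorphic_map (quotient_top TM (H.Fib ` carrier M)) (subtopology TN (f ` carrier M)) (\<lambda>C. f (SOME x. x \<in> C))"
    unfolding strict_hom_def H.cosets_fib ..
  show ?thesis
  proof
    assume "strict_hom M TM N TN f"
    then have "H.OPEN" using H.strict_OPEN eq by blast
    then show "closedin TN (f ` carrier M)" by (rule H.OPEN_closed)
  next
    assume "closedin TN (f ` carrier M)"
    then have "H.OPEN" by (rule H.closed_OPEN)
    then show "strict_hom M TM N TN f" using H.OPEN_strict eq by blast
  qed
qed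

end
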